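(* Let $n\ge 1$, $c>0$, $m$, $\hbar\neq 0$ be constants and let $\omega^0,\omega^1\in(-\pi/2,\pi/2]$. Let $a_\ast$ be a nowhere vanishing, differentiable complex-valued function of $t\in\mathbb{R}$ such that $\theta:=\arg a_\ast(t)$ is a constant independent of $t$. Put $C_0:=2me^{i\omega^0}/\hbar$. Let $V_0$ and $V_0'$ be functions on $\mathbb{C}$ such that $$\partial_t V_0(\psi)=\mathrm{Re}\,\big(\partial_t\overline{\psi}\,V_0'(\psi)\big)$$ for every function $\psi=\psi(t,x)$. Assume $C_0\in\mathbb{R}$ and $e^{2i(\theta+\omega^1)}/e^{2i\omega^0}\in\mathbb{R}$. Let $\phi_\ast=\phi_\ast(t,x)$, $(t,x)\in\mathbb{R}\times\mathbb{R}^n$, be a complex-valued solution of $$-\frac{1}{c^2}\frac{e^{2i(\theta+\omega^1)}}{e^{2i\omega^0}}\left(\partial_t^2+\frac{n\,\partial_t a_\ast}{a_\ast}\partial_t+\Big(\frac{mc^2e^{i\omega^0}}{\hbar}\Big)^2\right)\phi_\ast+\frac{1}{|a_\ast|^2}\Delta_x\phi_\ast-V_0'(\phi_\ast)=0,$$ where $\Delta_x=\sum_{j=1}^n\partial^2/(\partial x^j)^2$, which is sufficiently smooth and decays at spatial infinity so that all integrals below are finite and integrals over $\mathbb{R}^n$ of spatial divergences vanish. Then for every $t$, $$\int_{\mathbb{R}^n}e^0(t,x)\,dx+\int_0^t\int_{\mathbb{R}^n}e^{n+1}(s,x)\,dx\,ds=\int_{\mathbb{R}^n}e^0(0,x)\,dx,$$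 where $$e^0:=\frac{e^{2i(\theta+\omega^1)}}{c^2e^{2i\omega^0}}\left(|\partial_t\phi_\ast|^2+\frac{C_0^2c^4}{4}|\phi_\ast|^2\right)+\frac{1}{|a_\ast|^2}\sum_{j=1}^n|\partial_{x^j}\phi_\ast|^2+2V_0(\phi_\ast)$$ and $$e^{n+1}:=\frac{e^{2i(\theta+\omega^1)}}{c^2e^{2i\omega^0}}\,2\,\mathrm{Re}\Big(\frac{n\,\partial_t a_\ast}{a_\ast}\Big)|\partial_t\phi_\ast|^2-\partial_t\Big(\frac{1}{|a_\ast|^2}\Big)\sum_{j=1}^n|\partial_{x^j}\phi_\ast|^2.$$
   Context: Here $a_\ast$ plays the role of a (complex) scale-function of space; $t$ is a real time variable and $x=(x^1,\dots,x^n)\in\mathbb{R}^n$. *)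

theory Defs
  imports "HOL-Analysis.Analysis"
begin

definition pt :: "(real \<Rightarrow> 'a \<Rightarrow> 'b::real_normed_vector) \<Rightarrow> real \<Rightarrow> 'a \<Rightarrow> 'b" where
  "pt f t x = vector_derivative (\<lambda>s. f s x) (at t)"

definition px :: "'n::finite \<Rightarrow> (real \<Rightarrow> real^'n \<Rightarrow> 'b::real_normed_vector) \<Rightarrow> real \<Rightarrow> real^'n \<Rightarrow> 'b" where
  "px j f t x = vector_derivative (\<lambda>h. f t (x + h *\<^sub>R axis j 1)) (at 0)"

definition lap :: "(real \<Rightarrow> real^'n::finite \<Rightarrow> 'b::real_normed_vector) \<Rightarrow> real \<Rightarrow> real^'n \<Rightarrow> 'b" where
  "lap f t x = (\<Sum>j\<in>UNIV. px j (px j f) t x)"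

definition C2 :: "('a::real_normed_vector \<Rightarrow> 'b::real_normed_vector) \<Rightarrow> bool" where
  "C2 f \<longleftrightarrow> (\<exists>D D2. (\<forall>p. (f has_derivative blinfun_apply (D p)) (at p)) \<and>
                     (\<forall>p. (D has_derivative blinfun_apply (D2 p)) (at p)) \<and>
                     continuous_on UNIV D2)"

text \<open>Energy density e^0. Here K stands for exp(2i(theta+omega1))/exp(2i omega0).\<close>
definition e0 :: "complex \<Rightarrow> real \<Rightarrow> complex \<Rightarrow> (real \<Rightarrow> complex) \<Rightarrow> (complex \<Rightarrow> complex)
                  \<Rightarrow> (real \<Rightarrow> real^'n::finite \<Rightarrow> complex) \<Rightarrow> real \<Rightarrow> real^'n \<Rightarrow> complex" where
  "e0 K c C0 a V0 \<phi> t x =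
     K / of_real (c^2) * (of_real ((cmod (pt \<phi> t x))^2) + C0^2 * of_real (c^4) / 4 * of_real ((cmod (\<phi> t x))^2))
     + of_real (1 / (cmod (a t))^2) * of_real (\<Sum>j\<in>UNIV. (cmod (px j \<phi> t x))^2)
     + 2 * V0 (\<phi> t x)"

definition e1 :: "complex \<Rightarrow> real \<Rightarrow> (real \<Rightarrow> complex)
                  \<Rightarrow> (real \<Rightarrow> real^'n::finite \<Rightarrow> complex) \<Rightarrow> real \<Rightarrow> real^'n \<Rightarrow> complex" where
  "e1 K c a \<phi> t x =
     K / of_real (c^2) * 2 * of_real (Re (of_nat CARD('n) * vector_derivative a (at t) / a t))
        * of_real ((cmod (pt \<phi> t x))^2)
     - of_real (vector_derivative (\<lambda>s. 1 / (cmod (a s))^2) (at t)) * of_real (\<Sum>j\<in>UNIV. (cmod (px j \<phi> t x))^2)"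

definition oint :: "real \<Rightarrow> real \<Rightarrow> (real \<Rightarrow> 'b::euclidean_space) \<Rightarrow> 'b" where
  "oint a b f = (if a \<le> b then integral {a..b} f else - integral {b..a} f)"

end

theory Submission
  imports Defs
begin


lemma D_lin_bound:
  fixes D :: "'a::real_normed_vector \<Rightarrow> 'b::real_normed_vector"
  assumes dD: "\<And>q. (D has_derivative blinfun_apply (D2 q)) (at q)"
    and cont: "continuous (at p) D2" and e: "e > 0"
  obtains d where "d > 0" "\<And>a b. a \<in> ball p d \<Longrightarrow> b \<in> ball p d \<Longrightarrow>
      norm (D b - D a - blinfun_apply (D2 p) (b - a)) \<le> norm (b - a) * e"
proof -
  obtain d where d: "d > 0" "\<And>x. dist x p < d \<Longrightarrow> dist (D2 x) (D2 p) < e"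
    using cont e unfolding continuous_at_eps_delta by metis
  have "norm (D b - D a - blinfun_apply (D2 p) (b - a)) \<le> norm (b - a) * e"
    if "a \<in> ball p d" "b \<in> ball p d" for a b
  proof (rule differentiable_bound_linearization[where S="ball p d" and f'="\<lambda>x. blinfun_apply (D2 x)"])
    show "a + t *\<^sub>R (b - a) \<in> ball p d" if "t \<in> {0..1}" for t
      using convex_ball[of p d, unfolded convex_alt] that \<open>a \<in> _\<close> \<open>b \<in> _\<close>
      by (metis (no_types, lifting) atLeastAtMost_iff add.commute diff_add_cancel scaleR_collapse
          scaleR_right_diff_distrib add_diff_eq)
    show "(D has_derivative blinfun_apply (D2 x)) (at x within ball p d)" for x
      using dD has_derivative_at_withinI by blast
    show "onorm (blinfun_apply (D2 x) - blinfun_apply (D2 p)) \<le> e" if "x \<in> ball p d" for x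
    proof -
      have "blinfun_apply (D2 x) - blinfun_apply (D2 p) = blinfun_apply (D2 x - D2 p)"
        by (auto simp: fun_diff_def blinfun.diff_left)
      moreover have "norm (D2 x - D2 p) < e" using d(2)[of x] that by (simp add: dist_norm norm_minus_commute)
      ultimately show ?thesis by (simp add: norm_blinfun.rep_eq)
    qed
    show "p \<in> ball p d" using d by simp
  qed
  then show ?thesis using that d by blast
qed

lemma line_deriv:
  assumes dF: "\<And>q. (F has_derivative blinfun_apply (D q)) (at q)"
  shows "((\<lambda>s. F (a + s *\<^sub>R v)) has_derivative (\<lambda>r. r *\<^sub>R blinfun_apply (D (a + s *\<^sub>R v)) v)) (at s within S)"
proof -
  have "((\<lambda>s. a + s *\<^sub>R v) has_derivative (\<lambda>r. r *\<^sub>R v)) (at s within S)"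
    by (auto intro!: derivative_eq_intros)
  from has_derivative_compose[OF this has_derivative_at_withinI[OF dF]]
  show ?thesis by (simp add: blinfun.scaleR_right)
qed

lemma line_vderiv:
  assumes dF: "\<And>q. (F has_derivative blinfun_apply (D q)) (at q)"
  shows "((\<lambda>s. F (a + s *\<^sub>R v)) has_vector_derivative blinfun_apply (D (a + s *\<^sub>R v)) v) (at s within S)"
  using line_deriv[OF dF] unfolding has_vector_derivative_def by blast

lemma g_bound:
  fixes F :: "'a::real_normed_vector \<Rightarrow> 'b::real_normed_vector"
  assumes dF: "\<And>q. (F has_derivative blinfun_apply (D q)) (at q)"
    and dD: "\<And>q. (D has_derivative blinfun_apply (D2 q)) (at q)"
    and lin: "\<And>a b. a \<in> ball p d \<Longrightarrow> b \<in> ball p d \<Longrightarrow>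
      norm (D b - D a - blinfun_apply (D2 p) (b - a)) \<le> norm (b - a) * e"
    and h: "\<bar>h\<bar> * (norm u + norm v) < d" and e: "e \<ge> 0"
  shows "norm ((F (p + h *\<^sub>R u + h *\<^sub>R v) - F (p + h *\<^sub>R u) - F (p + h *\<^sub>R v) + F p)
            - h\<^sup>2 *\<^sub>R blinfun_apply (blinfun_apply (D2 p) u) v) \<le> 3 * e * h\<^sup>2 * norm u * norm v"
proof -
  define f where "f s = F (p + h *\<^sub>R u + s *\<^sub>R v) - F (p + s *\<^sub>R v)" for s
  define f' where "f' s = (\<lambda>r::real. r *\<^sub>R (blinfun_apply (D (p + h *\<^sub>R u + s *\<^sub>R v)) v
                               - blinfun_apply (D (p + s *\<^sub>R v)) v))" for s
  let ?S = "closed_segment 0 h"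
  have inS: "\<bar>s\<bar> \<le> \<bar>h\<bar>" if "s \<in> ?S" for s
    using that by (auto simp: closed_segment_eq_real_ivl split: if_splits)
  have inball: "p + h *\<^sub>R u + s *\<^sub>R v \<in> ball p d" "p + s *\<^sub>R v \<in> ball p d" if "\<bar>s\<bar> \<le> \<bar>h\<bar>" for s
  proof -
    have "norm (h *\<^sub>R u + s *\<^sub>R v) \<le> \<bar>h\<bar> * norm u + \<bar>s\<bar> * norm v"
      by (metis norm_scaleR norm_triangle_ineq)
    also have "\<dots> \<le> \<bar>h\<bar> * (norm u + norm v)"
      using that by (simp add: distrib_left mult_right_mono)
    moreover have "norm (- (h *\<^sub>R u) - s *\<^sub>R v) = norm (h *\<^sub>R u + s *\<^sub>R v)"
      by (metis minus_add_distrib norm_minus_cancel diff_conv_add_uminus)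
    ultimately show "p + h *\<^sub>R u + s *\<^sub>R v \<in> ball p d" using h
      by (simp add: dist_norm add.assoc)
    have "norm (s *\<^sub>R v) \<le> \<bar>h\<bar> * (norm u + norm v)"
    proof -
      have "\<bar>s\<bar> * norm v \<le> \<bar>h\<bar> * norm v" using that by (simp add: mult_right_mono)
      moreover have "0 \<le> \<bar>h\<bar> * norm u" by simp
      ultimately show ?thesis unfolding distrib_left norm_scaleR by linarith
    qed
    then show "p + s *\<^sub>R v \<in> ball p d" using h by (simp add: dist_norm)
  qed
  have W: "norm (blinfun_apply (D (p + h *\<^sub>R u + s *\<^sub>R v)) v - blinfun_apply (D (p + s *\<^sub>R v)) v
          - blinfun_apply (blinfun_apply (D2 p) (h *\<^sub>R u)) v) \<le> \<bar>h\<bar> * norm u * e * norm v"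
    if "\<bar>s\<bar> \<le> \<bar>h\<bar>" for s
  proof -
    have "norm (D (p + h *\<^sub>R u + s *\<^sub>R v) - D (p + s *\<^sub>R v) - blinfun_apply (D2 p) (h *\<^sub>R u))
          \<le> \<bar>h\<bar> * norm u * e"
      using lin[OF inball(2)[OF that] inball(1)[OF that]] by (simp add: algebra_simps)
    then have "norm (D (p + h *\<^sub>R u + s *\<^sub>R v) - D (p + s *\<^sub>R v) - blinfun_apply (D2 p) (h *\<^sub>R u)) * norm v
          \<le> \<bar>h\<bar> * norm u * e * norm v" by (simp add: mult_right_mono)
    moreover have "norm (blinfun_apply (D (p + h *\<^sub>R u + s *\<^sub>R v) - D (p + s *\<^sub>R v) - blinfun_apply (D2 p) (h *\<^sub>R u)) v)
       \<le> norm (D (p + h *\<^sub>R u + s *\<^sub>R v) - D (p + s *\<^sub>R v) - blinfun_apply (D2 p) (h *\<^sub>R u)) * norm v"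
      by (rule norm_blinfun)
    ultimately show ?thesis by (simp add: blinfun.diff_left)
  qed
  have main: "norm (f h - f 0 - f' 0 (h - 0)) \<le> norm (h - 0) * (2 * (\<bar>h\<bar> * norm u * e * norm v))"
  proof (rule differentiable_bound_linearization[where S="?S"])
    show "0 + t *\<^sub>R (h - 0) \<in> ?S" if "t \<in> {0..1}" for t
      using that by (auto simp: closed_segment_def)
    show "(f has_derivative f' x) (at x within ?S)" for x
      unfolding f_def f'_def
      using has_derivative_diff[OF line_deriv[OF dF, of "p + h *\<^sub>R u" v x ?S] line_deriv[OF dF, of p v x ?S]]
      by (simp add: scaleR_diff_right)
    show "onorm (f' x - f' 0) \<le> 2 * (\<bar>h\<bar> * norm u * e * norm v)" if "x \<in> ?S" for x
    proof (rule onorm_le)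
      fix r :: real
      have "norm ((f' x - f' 0) r) = \<bar>r\<bar> * norm ((blinfun_apply (D (p + h *\<^sub>R u + x *\<^sub>R v)) v - blinfun_apply (D (p + x *\<^sub>R v)) v
          - blinfun_apply (blinfun_apply (D2 p) (h *\<^sub>R u)) v) - (blinfun_apply (D (p + h *\<^sub>R u + 0 *\<^sub>R v)) v - blinfun_apply (D (p + 0 *\<^sub>R v)) v
          - blinfun_apply (blinfun_apply (D2 p) (h *\<^sub>R u)) v))"
        by (simp add: f'_def fun_diff_def scaleR_diff_right[symmetric])
      also have "\<dots> \<le> \<bar>r\<bar> * (\<bar>h\<bar> * norm u * e * norm v + \<bar>h\<bar> * norm u * e * norm v)"
        by (intro mult_left_mono order_trans[OF norm_triangle_ineq4] add_mono W inS that) auto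
      finally show "norm ((f' x - f' 0) r) \<le> 2 * (\<bar>h\<bar> * norm u * e * norm v) * norm r" by (simp add: mult_ac)
    qed
  qed auto
  have lin0: "norm (h *\<^sub>R (blinfun_apply (D (p + h *\<^sub>R u)) v - blinfun_apply (D p) v
          - blinfun_apply (blinfun_apply (D2 p) (h *\<^sub>R u)) v)) \<le> \<bar>h\<bar> * (\<bar>h\<bar> * norm u * e * norm v)"
    using W[of 0] by (simp add: mult_left_mono)
  have eq: "(F (p + h *\<^sub>R u + h *\<^sub>R v) - F (p + h *\<^sub>R u) - F (p + h *\<^sub>R v) + F p)
            - h\<^sup>2 *\<^sub>R blinfun_apply (blinfun_apply (D2 p) u) v
     = (f h - f 0 - f' 0 (h - 0)) + h *\<^sub>R (blinfun_apply (D (p + h *\<^sub>R u)) v - blinfun_apply (D p) v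
          - blinfun_apply (blinfun_apply (D2 p) (h *\<^sub>R u)) v)"
    by (simp add: f_def f'_def blinfun.scaleR_left blinfun.scaleR_right power2_eq_square algebra_simps)
  show ?thesis
    unfolding eq
    apply (rule order_trans[OF norm_triangle_ineq])
    using main lin0 by (simp add: power2_eq_square algebra_simps)
qed

lemma eps_aux:
  fixes x M :: real
  assumes "\<And>e. e > 0 \<Longrightarrow> x \<le> 6 * e * M" "M \<ge> 0"
  shows "x \<le> 0"
proof (rule field_le_epsilon)
  fix e :: real assume e: "e > 0"
  have pos: "6 * (M + 1) > 0" using assms(2) by simp
  then have "e / (6 * (M + 1)) > 0" using e by simp
  from assms(1)[OF this] have "x \<le> 6 * (e / (6 * (M + 1))) * M" .
  also have "6 * (e / (6 * (M + 1))) * M = e * (M / (M + 1))" using pos by (simp add: field_simps)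
  also have "e * (M / (M + 1)) \<le> e * 1" using e assms(2) by (intro mult_left_mono) auto
  finally show "x \<le> 0 + e" by simp
qed

lemma second_deriv_sym:
  fixes F :: "'a::real_normed_vector \<Rightarrow> 'b::real_normed_vector"
  assumes dF: "\<And>q. (F has_derivative blinfun_apply (D q)) (at q)"
    and dD: "\<And>q. (D has_derivative blinfun_apply (D2 q)) (at q)"
    and cont: "continuous (at p) D2"
  shows "blinfun_apply (blinfun_apply (D2 p) u) v = blinfun_apply (blinfun_apply (D2 p) v) u"
proof -
  let ?X = "blinfun_apply (blinfun_apply (D2 p) u) v - blinfun_apply (blinfun_apply (D2 p) v) u"
  have "norm ?X \<le> 6 * e * norm u * norm v" if e: "e > 0" for e
  proof -
    obtain d where d: "d > 0" and lin: "\<And>a b. a \<in> ball p d \<Longrightarrow> b \<in> ball p d \<Longrightarrow>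
      norm (D b - D a - blinfun_apply (D2 p) (b - a)) \<le> norm (b - a) * e"
      using D_lin_bound[OF dD cont e] by metis
    define h where "h = d / (2 * (norm u + norm v + 1))"
    have hpos: "h > 0" using d norm_ge_zero[of u] norm_ge_zero[of v] unfolding h_def
      by (smt (verit) divide_pos_pos)
    have hb: "\<bar>h\<bar> * (norm u + norm v) < d"
    proof -
      have "\<bar>h\<bar> * (norm u + norm v) \<le> h * (norm u + norm v + 1)" using hpos by simp
      also have "\<dots> = d / 2" unfolding h_def
      proof -
        have nz: "norm u + norm v + 1 \<noteq> 0" using norm_ge_zero[of u] norm_ge_zero[of v] by linarith
        have cancel: "\<And>X::real. X \<noteq> 0 \<Longrightarrow> d / (2 * X) * X = d / 2" by simp
        show "d / (2 * (norm u + norm v + 1)) * (norm u + norm v + 1) = d / 2" by (rule cancel[OF nz])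
      qed
      finally show ?thesis using d by simp
    qed
    have hb': "\<bar>h\<bar> * (norm v + norm u) < d" using hb by (simp add: add.commute)
    define G where "G = F (p + h *\<^sub>R u + h *\<^sub>R v) - F (p + h *\<^sub>R u) - F (p + h *\<^sub>R v) + F p"
    have G': "G = F (p + h *\<^sub>R v + h *\<^sub>R u) - F (p + h *\<^sub>R v) - F (p + h *\<^sub>R u) + F p"
      unfolding G_def by (simp add: algebra_simps)
    have 1: "norm (G - h\<^sup>2 *\<^sub>R blinfun_apply (blinfun_apply (D2 p) u) v) \<le> 3 * e * h\<^sup>2 * norm u * norm v"
      unfolding G_def by (rule g_bound[OF dF dD lin hb]) (use e in auto)
    have 2: "norm (G - h\<^sup>2 *\<^sub>R blinfun_apply (blinfun_apply (D2 p) v) u) \<le> 3 * e * h\<^sup>2 * norm v * norm u"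
      unfolding G' by (rule g_bound[OF dF dD lin hb']) (use e in auto)
    define A where "A = G - h\<^sup>2 *\<^sub>R blinfun_apply (blinfun_apply (D2 p) v) u"
    define B where "B = G - h\<^sup>2 *\<^sub>R blinfun_apply (blinfun_apply (D2 p) u) v"
    have "h\<^sup>2 *\<^sub>R ?X = A - B"
      unfolding A_def B_def by (simp add: algebra_simps)
    then have "norm (h\<^sup>2 *\<^sub>R ?X) \<le> norm A + norm B" by (simp only: norm_triangle_ineq4)
    then have "h\<^sup>2 * norm ?X \<le> 3 * e * h\<^sup>2 * norm v * norm u + 3 * e * h\<^sup>2 * norm u * norm v"
      using 1 2 unfolding A_def B_def by (simp only: norm_scaleR abs_power2)
    moreover have "3 * e * h\<^sup>2 * norm v * norm u + 3 * e * h\<^sup>2 * norm u * norm v = h\<^sup>2 * (6 * e * norm u * norm v)"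
      by (simp add: algebra_simps)
    ultimately have "h\<^sup>2 * norm ?X \<le> h\<^sup>2 * (6 * e * norm u * norm v)" by linarith
    then show ?thesis using hpos by simp
  qed
  then have "norm ?X \<le> 0" by (metis eps_aux mult.assoc mult_nonneg_nonneg norm_ge_zero)
  then show ?thesis by simp
qed




lemma ftc_part:
  fixes E F :: "real \<Rightarrow> complex"
  assumes d: "\<And>s. (E has_vector_derivative - F s) (at s)"
  shows "E t + oint 0 t F = E 0"
proof (cases "0 \<le> t")
  case True
  have "((\<lambda>s. - F s) has_integral E t - E 0) {0..t}"
    by (rule fundamental_theorem_of_calculus[OF True]) (use d has_vector_derivative_at_within in blast)
  from has_integral_neg[OF this] have "(F has_integral E 0 - E t) {0..t}" by simp
  then show ?thesis using True by (simp add: oint_def integral_unique)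
next
  case False
  have "((\<lambda>s. - F s) has_integral E 0 - E t) {t..0}"
    by (rule fundamental_theorem_of_calculus) (use False in simp, use d has_vector_derivative_at_within in blast)
  from has_integral_neg[OF this] have "(F has_integral E t - E 0) {t..0}" by simp
  then show ?thesis using False by (simp add: oint_def integral_unique)
qed

lemma vd_normsq:
  fixes f :: "real \<Rightarrow> complex"
  assumes "(f has_vector_derivative f') (at s)"
  shows "((\<lambda>r. complex_of_real ((cmod (f r))\<^sup>2)) has_vector_derivative
           of_real (2 * Re (cnj f' * f s))) (at s)"
proof -
  have 1: "((\<lambda>r. f r * cnj (f r)) has_vector_derivative f s * cnj f' + f' * cnj (f s)) (at s)"
    by (intro has_vector_derivative_mult has_vector_derivative_cnj assms)
  have 2: "f s * cnj f' + f' * cnj (f s) = of_real (2 * Re (cnj f' * f s))"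
    by (simp add: complex_eq_iff)
  have eq: "(\<lambda>r. complex_of_real ((cmod (f r))\<^sup>2)) = (\<lambda>r. f r * cnj (f r))"
    by (rule ext, rule complex_norm_square)
  show ?thesis unfolding eq 2[symmetric] by (rule 1)
qed

lemma bl_ofRe: "bounded_linear (\<lambda>z::complex. complex_of_real (Re z))"
  by (rule bounded_linear_compose[OF bounded_linear_of_real bounded_linear_Re])

lemma re_ofr: "Re (complex_of_real r * z) = r * Re z" by simp
lemma re_cnj_swap: "Re (cnj a * b) = Re (cnj b * a)" by simp
lemma re_N: "Re (cnj f * (N * f)) = Re N * (cmod f)\<^sup>2"
  unfolding cmod_power2 by (simp add: power2_eq_square algebra_simps)

lemma closed_line:
  fixes v :: "'b::real_normed_vector"
  assumes "v \<noteq> 0"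
  shows "closed (range (\<lambda>r::real. r *\<^sub>R v))"
proof -
  have "complete ((\<lambda>r::real. r *\<^sub>R v) ` UNIV)"
    by (rule complete_isometric_image[where e="norm v"])
       (use assms in \<open>auto simp: bounded_linear_scaleR_left complete_UNIV\<close>)
  then show ?thesis by (rule complete_imp_closed)
qed

lemma tendsto_scaleR_cancel:
  fixes v :: "'b::real_normed_vector"
  assumes v: "v \<noteq> 0" and F: "F \<noteq> bot" and lim: "((\<lambda>p. X p *\<^sub>R v) \<longlongrightarrow> z) F"
  shows "\<exists>r. z = r *\<^sub>R v \<and> (X \<longlongrightarrow> r) F"
proof -
  have "z \<in> range (\<lambda>r::real. r *\<^sub>R v)"
    by (rule Lim_in_closed_set[OF closed_line[OF v] _ F lim]) (intro always_eventually, auto)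
  then obtain r where z: "z = r *\<^sub>R v" by auto
  have "(X \<longlongrightarrow> r) F"
  proof (rule tendstoI)
    fix e :: real assume e: "e > 0"
    have "e * norm v > 0" using e v by simp
    from tendstoD[OF lim this] show "\<forall>\<^sub>F p in F. dist (X p) r < e"
    proof (rule eventually_mono)
      fix p assume "dist (X p *\<^sub>R v) z < e * norm v"
      then have "\<bar>X p - r\<bar> * norm v < e * norm v"
        by (simp add: z dist_norm scaleR_diff_left[symmetric])
      then show "dist (X p) r < e" using v by (simp add: dist_real_def)
    qed
  qed
  with z show ?thesis by blast
qed

lemma has_integral_scaleR_cancel_cbox:
  fixes v :: "'b::real_normed_vector" and g :: "'n::euclidean_space \<Rightarrow> real"
  assumes v: "v \<noteq> 0" and h: "((\<lambda>x. g x *\<^sub>R v) has_integral z) (cbox a b)"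
  shows "\<exists>r. z = r *\<^sub>R v \<and> (g has_integral r) (cbox a b)"
proof -
  have "((\<lambda>p. (\<Sum>(x,k)\<in>p. Henstock_Kurzweil_Integration.content k *\<^sub>R g x) *\<^sub>R v) \<longlongrightarrow> z) (division_filter (cbox a b))"
    using h unfolding has_integral_cbox by (simp add: scaleR_sum_left split_beta')
  from tendsto_scaleR_cancel[OF v division_filter_not_empty this]
  show ?thesis unfolding has_integral_cbox by blast
qed

lemma has_integral_scaleR_cancel_UNIV:
  fixes v :: "'b::real_normed_vector" and g :: "'n::euclidean_space \<Rightarrow> real"
  assumes v: "v \<noteq> 0" and h: "((\<lambda>x. g x *\<^sub>R v) has_integral 0) UNIV"
  shows "(g has_integral 0) UNIV"
proof (cases "\<exists>a b. (UNIV :: 'n set) = cbox a b")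
  case True
  then obtain a b where ab: "(UNIV :: 'n set) = cbox a b" by blast
  from has_integral_scaleR_cancel_cbox[OF v h[unfolded ab]] v show ?thesis
    unfolding ab by auto
next
  case False
  show ?thesis
  proof (subst has_integral_alt, simp only: False if_False, intro allI impI)
    fix e :: real assume e: "e > 0"
    then have "e * norm v > 0" using v by simp
    from has_integral_altD[OF h False this] obtain B where B: "B > 0"
      "\<forall>a b. ball 0 B \<subseteq> cbox a b \<longrightarrow> (\<exists>z. ((\<lambda>x. if x \<in> UNIV then g x *\<^sub>R v else 0) has_integral z) (cbox a b) \<and> norm (z - 0) < e * norm v)"
      by blast
    show "\<exists>B>0. \<forall>a b. ball 0 B \<subseteq> cbox a b \<longrightarrow>
          (\<exists>z. ((\<lambda>x. if x \<in> UNIV then g x else 0) has_integral z) (cbox a b) \<and> norm (z - 0) < e)"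
    proof (rule exI[of _ B], intro conjI allI impI)
      fix a b :: 'n assume "ball 0 B \<subseteq> cbox a b"
      then have "\<exists>z. ((\<lambda>x. g x *\<^sub>R v) has_integral z) (cbox a b) \<and> norm z < e * norm v"
        using B(2) by simp
      then obtain z where z: "((\<lambda>x. g x *\<^sub>R v) has_integral z) (cbox a b)" "norm z < e * norm v"
        by blast
      from has_integral_scaleR_cancel_cbox[OF v z(1)] obtain r where
        r: "z = r *\<^sub>R v" "(g has_integral r) (cbox a b)" by blast
      have "\<bar>r\<bar> < e" using z(2) v unfolding r by simp
      with r show "\<exists>z. ((\<lambda>x. if x \<in> UNIV then g x else 0) has_integral z) (cbox a b) \<and> norm (z - 0) < e"
        by auto
    qed (use B in auto)
  qed
qed

lemma div_generic:
  fixes \<phi> :: "real \<Rightarrow> real^'n::finite \<Rightarrow> complex"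
  assumes P: "((\<lambda>h. px j \<phi> s (x + h *\<^sub>R axis j 1)) has_vector_derivative P) (at 0)"
    and Q: "((\<lambda>h. pt \<phi> s (x + h *\<^sub>R axis j 1)) has_vector_derivative Q) (at 0)"
  shows "px j (\<lambda>r y. (of_real (Re (cnj (px j \<phi> r y) * pt \<phi> r y)) :: 'b::{real_normed_vector,real_algebra_1})) s x
     = of_real (Re (cnj P * pt \<phi> s x + cnj (px j \<phi> s x) * Q))"
proof -
  have "((\<lambda>h. cnj (px j \<phi> s (x + h *\<^sub>R axis j 1)) * pt \<phi> s (x + h *\<^sub>R axis j 1)) has_vector_derivative
      cnj (px j \<phi> s x) * Q + cnj P * pt \<phi> s x) (at 0)"
    using has_vector_derivative_mult[OF has_vector_derivative_cnj[OF P] Q] by simp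
  from bounded_linear.has_vector_derivative[OF bounded_linear_compose[OF bounded_linear_scaleR_left[of "1::'b"] bounded_linear_Re] this]
  show ?thesis unfolding px_def of_real_def
    by (intro vector_derivative_at) (simp add: add.commute)
qed

lemma cancel_div:
  fixes \<phi> :: "real \<Rightarrow> real^'n::finite \<Rightarrow> complex"
  assumes h: "((\<lambda>x. \<Sum>j\<in>UNIV. px j (\<lambda>r y. (of_real (Re (cnj (px j \<phi> r y) * pt \<phi> r y)) :: 'b::{real_normed_vector,real_algebra_1})) s x) has_integral 0) UNIV"
   and P: "\<And>x j. ((\<lambda>h. px j \<phi> s (x + h *\<^sub>R axis j 1)) has_vector_derivative P x j) (at 0)"
   and Q: "\<And>x j. ((\<lambda>h. pt \<phi> s (x + h *\<^sub>R axis j 1)) has_vector_derivative Q x j) (at 0)"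
  shows "((\<lambda>x. \<Sum>j\<in>UNIV. Re (cnj (P x j) * pt \<phi> s x + cnj (px j \<phi> s x) * Q x j)) has_integral 0) UNIV"
proof (rule has_integral_scaleR_cancel_UNIV[where v="1::'b"])
  show "(1::'b) \<noteq> 0" by simp
  have "(\<lambda>x. \<Sum>j\<in>UNIV. px j (\<lambda>r y. (of_real (Re (cnj (px j \<phi> r y) * pt \<phi> r y)) :: 'b)) s x)
     = (\<lambda>x. (\<Sum>j\<in>UNIV. Re (cnj (P x j) * pt \<phi> s x + cnj (px j \<phi> s x) * Q x j)) *\<^sub>R (1::'b))"
    by (rule ext) (simp only: div_generic[OF P Q], simp only: of_real_def scaleR_sum_left)
  with h show "((\<lambda>x. (\<Sum>j\<in>UNIV. Re (cnj (P x j) * pt \<phi> s x + cnj (px j \<phi> s x) * Q x j)) *\<^sub>R (1::'b)) has_integral 0) UNIV"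
    by simp
qed


theorem lemma6p1:
  fixes c :: real and m hbar :: complex and \<omega>0 \<omega>1 \<theta> :: real
    and a :: "real \<Rightarrow> complex"
    and V0 V0' :: "complex \<Rightarrow> complex"
    and \<phi> :: "real \<Rightarrow> real^'n::finite \<Rightarrow> complex"
    and C0 K :: complex and t :: real
  assumes c_pos: "c > 0"
    and hbar_nz: "hbar \<noteq> 0"
    and om0: "- (pi/2) < \<omega>0" "\<omega>0 \<le> pi/2"
    and om1: "- (pi/2) < \<omega>1" "\<omega>1 \<le> pi/2"
    and a_nz: "\<forall>s. a s \<noteq> 0"
    and a_diff: "\<forall>s. a differentiable (at s)"
    and a_arg: "\<forall>s. Arg (a s) = \<theta>"
    and C0_def: "C0 = 2 * m * exp (\<i> * of_real \<omega>0) / hbar"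
    and K_def: "K = exp (2 * \<i> * of_real (\<theta> + \<omega>1)) / exp (2 * \<i> * of_real \<omega>0)"
    and V0_deriv: "\<forall>\<psi> :: real \<Rightarrow> complex. \<forall>s. \<psi> differentiable (at s) \<longrightarrow>
        ((\<lambda>r. V0 (\<psi> r)) has_vector_derivative
           of_real (Re (cnj (vector_derivative \<psi> (at s)) * V0' (\<psi> s)))) (at s)"
    and C0_real: "C0 \<in> \<real>"
    and K_real: "K \<in> \<real>"
    and equation: "\<forall>s x.
        - (1 / of_real (c^2)) * K *
          (pt (pt \<phi>) s x + of_nat CARD('n) * vector_derivative a (at s) / a s * pt \<phi> s x
           + (m * of_real (c^2) * exp (\<i> * of_real \<omega>0) / hbar)^2 * \<phi> s x)
        + of_real (1 / (cmod (a s))^2) * lap \<phi> s x - V0' (\<phi> s x) = 0"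
    and smooth: "C2 (\<lambda>p :: real \<times> (real^'n). \<phi> (fst p) (snd p))"
    and e0_int: "\<forall>s. e0 K c C0 a V0 \<phi> s integrable_on UNIV"
    and e1_int: "\<forall>s. e1 K c a \<phi> s integrable_on UNIV"
    and diff_under_int: "\<forall>s. ((\<lambda>r. integral UNIV (e0 K c C0 a V0 \<phi> r)) has_vector_derivative
                              integral UNIV (pt (e0 K c C0 a V0 \<phi>) s)) (at s)"
    and div_vanish: "\<forall>s. ((\<lambda>x. \<Sum>j\<in>UNIV.
              px j (\<lambda>r y. of_real (Re (cnj (px j \<phi> r y) * pt \<phi> r y))) s x) has_integral 0) UNIV"
  shows "integral UNIV (e0 K c C0 a V0 \<phi> t)
         + oint 0 t (\<lambda>s. integral UNIV (e1 K c a \<phi> s))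
         = integral UNIV (e0 K c C0 a V0 \<phi> 0)"
proof -
  obtain D D2 where dD: "\<And>p. ((\<lambda>p. \<phi> (fst p) (snd p)) has_derivative blinfun_apply (D p)) (at p)"
    and dD2: "\<And>p. (D has_derivative blinfun_apply (D2 p)) (at p)"
    and cD2: "continuous_on UNIV D2"
    using smooth unfolding C2_def by blast
  have cont: "continuous (at p) D2" for p
    using cD2 continuous_on_eq_continuous_at open_UNIV UNIV_I by blast
  have sym: "blinfun_apply (blinfun_apply (D2 p) u) v = blinfun_apply (blinfun_apply (D2 p) v) u" for p u v
    by (rule second_deriv_sym[OF dD dD2 cont])
  have L\<phi>: "((\<lambda>s. \<phi> (fst (q + s *\<^sub>R w)) (snd (q + s *\<^sub>R w))) has_vector_derivative
        blinfun_apply (D (q + s *\<^sub>R w)) w) (at s)" for q w s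
    using line_vderiv[OF dD, where a=q and v=w and s=s and S=UNIV] by simp
  have LD: "((\<lambda>s. blinfun_apply (D (q + s *\<^sub>R w)) z) has_vector_derivative
        blinfun_apply (blinfun_apply (D2 (q + s *\<^sub>R w)) w) z) (at s)" for q w s z
    using bounded_linear.has_vector_derivative[OF blinfun.bounded_linear_left line_vderiv[OF dD2, where a=q and v=w and s=s and S=UNIV]]
    by simp
  define \<tau> :: "real \<times> (real^'n)" where "\<tau> = (1, 0)"
  define \<sigma> :: "'n \<Rightarrow> real \<times> (real^'n)" where "\<sigma> j = (0, axis j 1)" for j
  have has_pt: "((\<lambda>s. \<phi> s x) has_vector_derivative blinfun_apply (D (r, x)) \<tau>) (at r)" for r x
    using L\<phi>[of "(0, x)" \<tau> r] by (simp add: \<tau>_def)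
  have pt_eq: "pt \<phi> r x = blinfun_apply (D (r, x)) \<tau>" for r x
    unfolding pt_def by (rule vector_derivative_at[OF has_pt])
  have has_px: "((\<lambda>h. \<phi> r (x + h *\<^sub>R axis j 1)) has_vector_derivative blinfun_apply (D (r, x + h *\<^sub>R axis j 1)) (\<sigma> j)) (at h)" for r x j h
    using L\<phi>[of "(r, x)" "\<sigma> j" h] by (simp add: \<sigma>_def)
  have px_eq: "px j \<phi> r x = blinfun_apply (D (r, x)) (\<sigma> j)" for j r x
    unfolding px_def using vector_derivative_at[OF has_px[of r x j 0]] by simp
  have has_ptpt: "((\<lambda>r. pt \<phi> r x) has_vector_derivative blinfun_apply (blinfun_apply (D2 (r, x)) \<tau>) \<tau>) (at r)" for r x
    using LD[where q="(0, x)" and w=\<tau> and s=r and z=\<tau>] by (simp add: \<tau>_def pt_eq)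
  have has_ptpx: "((\<lambda>r. px j \<phi> r x) has_vector_derivative blinfun_apply (blinfun_apply (D2 (r, x)) \<tau>) (\<sigma> j)) (at r)" for r x j
    using LD[where q="(0, x)" and w=\<tau> and s=r and z="\<sigma> j"] by (simp add: \<tau>_def px_eq)
  have has_pxpx: "((\<lambda>h. px j \<phi> s (x + h *\<^sub>R axis j 1)) has_vector_derivative blinfun_apply (blinfun_apply (D2 (s, x)) (\<sigma> j)) (\<sigma> j)) (at 0)" for s x j
    using LD[where q="(s, x)" and w="\<sigma> j" and s=0 and z="\<sigma> j"] by (simp add: \<sigma>_def px_eq)
  have has_pxpt: "((\<lambda>h. pt \<phi> s (x + h *\<^sub>R axis j 1)) has_vector_derivative blinfun_apply (blinfun_apply (D2 (s, x)) (\<sigma> j)) \<tau>) (at 0)" for s x j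
    using LD[where q="(s, x)" and w="\<sigma> j" and s=0 and z=\<tau>] by (simp add: \<sigma>_def pt_eq)
  have ptpt_eq: "pt (pt \<phi>) s x = blinfun_apply (blinfun_apply (D2 (s, x)) \<tau>) \<tau>" for s x
    unfolding pt_def[of "pt \<phi>"] by (rule vector_derivative_at[OF has_ptpt])
  have lap_eq: "lap \<phi> s x = (\<Sum>j\<in>UNIV. blinfun_apply (blinfun_apply (D2 (s, x)) (\<sigma> j)) (\<sigma> j))" for s x
    unfolding lap_def px_def[of _ "px _ \<phi>"] by (rule sum.cong[OF refl], rule vector_derivative_at[OF has_pxpx])
  have div_eq: "px j (\<lambda>r y. complex_of_real (Re (cnj (px j \<phi> r y) * pt \<phi> r y))) s x =
     of_real (Re (cnj (blinfun_apply (blinfun_apply (D2 (s, x)) (\<sigma> j)) (\<sigma> j)) * pt \<phi> s x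
                 + cnj (px j \<phi> s x) * blinfun_apply (blinfun_apply (D2 (s, x)) \<tau>) (\<sigma> j)))" for j s x
  proof -
    have "((\<lambda>h. cnj (px j \<phi> s (x + h *\<^sub>R axis j 1)) * pt \<phi> s (x + h *\<^sub>R axis j 1)) has_vector_derivative
       cnj (px j \<phi> s x) * blinfun_apply (blinfun_apply (D2 (s, x)) (\<sigma> j)) \<tau>
       + cnj (blinfun_apply (blinfun_apply (D2 (s, x)) (\<sigma> j)) (\<sigma> j)) * pt \<phi> s x) (at 0)"
      using has_vector_derivative_mult[OF has_vector_derivative_cnj[OF has_pxpx] has_pxpt] by simp
    from bounded_linear.has_vector_derivative[OF bl_ofRe this]
    show ?thesis unfolding px_def[of j "\<lambda>r y. complex_of_real (Re (cnj (px j \<phi> r y) * pt \<phi> r y))"]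
      by (intro vector_derivative_at) (simp add: sym add.commute)
  qed
  define A where "A r = 1 / (cmod (a r))\<^sup>2" for r
  have A_diff: "A differentiable (at r)" for r
  proof -
    have Re_d: "(\<lambda>r. Re (a r)) differentiable (at r)"
      by (rule differentiable_compose[OF bounded_linear_imp_differentiable[OF bounded_linear_Re]]) (use a_diff in blast)
    have Im_d: "(\<lambda>r. Im (a r)) differentiable (at r)"
      by (rule differentiable_compose[OF bounded_linear_imp_differentiable[OF bounded_linear_Im]]) (use a_diff in blast)
    have eq: "A = (\<lambda>r. 1 / ((Re (a r))\<^sup>2 + (Im (a r))\<^sup>2))"
      by (rule ext) (simp add: A_def cmod_power2)
    have nz: "(Re (a r))\<^sup>2 + (Im (a r))\<^sup>2 \<noteq> 0"
      using a_nz by (metis cmod_power2 norm_eq_zero power_not_zero)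
    show ?thesis unfolding eq
      by (intro differentiable_divide differentiable_add differentiable_power Re_d Im_d nz differentiable_const)
  qed
  define A' where "A' r = vector_derivative A (at r)" for r
  have has_A: "((\<lambda>r. complex_of_real (A r)) has_vector_derivative complex_of_real (A' r)) (at r)" for r
    unfolding A'_def
    by (rule bounded_linear.has_vector_derivative[OF bounded_linear_of_real])
       (use A_diff vector_derivative_works in blast)
  have A'_eq: "vector_derivative (\<lambda>s. 1 / (cmod (a s))\<^sup>2) (at r) = A' r" for r
    by (simp add: A'_def A_def[abs_def])
  define S3 where "S3 r x = (\<Sum>j\<in>UNIV. (cmod (px j \<phi> r x))\<^sup>2)" for r x
  have pte0: "pt (e0 K c C0 a V0 \<phi>) s x =
      K / of_real (c^2) * (of_real (2 * Re (cnj (pt (pt \<phi>) s x) * pt \<phi> s x))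
          + C0^2 * of_real (c^4) / 4 * of_real (2 * Re (cnj (pt \<phi> s x) * \<phi> s x)))
      + (of_real (A s) * of_real (\<Sum>j\<in>UNIV. 2 * Re (cnj (blinfun_apply (blinfun_apply (D2 (s, x)) \<tau>) (\<sigma> j)) * px j \<phi> s x))
         + of_real (A' s) * of_real (S3 s x))
      + 2 * of_real (Re (cnj (pt \<phi> s x) * V0' (\<phi> s x)))" for s x
  proof -
    have h1: "((\<lambda>r. complex_of_real ((cmod (pt \<phi> r x))\<^sup>2)) has_vector_derivative
        of_real (2 * Re (cnj (pt (pt \<phi>) s x) * pt \<phi> s x))) (at s)"
      using vd_normsq[OF has_ptpt[of x s]] by (simp add: ptpt_eq)
    have h2: "((\<lambda>r. complex_of_real ((cmod (\<phi> r x))\<^sup>2)) has_vector_derivative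
        of_real (2 * Re (cnj (pt \<phi> s x) * \<phi> s x))) (at s)"
      using vd_normsq[OF has_pt[of x s]] by (simp add: pt_eq)
    have h3: "((\<lambda>r. complex_of_real (S3 r x)) has_vector_derivative
        of_real (\<Sum>j\<in>UNIV. 2 * Re (cnj (blinfun_apply (blinfun_apply (D2 (s, x)) \<tau>) (\<sigma> j)) * px j \<phi> s x))) (at s)"
      unfolding S3_def of_real_sum
      by (rule has_vector_derivative_sum) (rule vd_normsq[OF has_ptpx])
    have dif: "(\<lambda>r. \<phi> r x) differentiable (at s)"
      using has_pt[of x s] unfolding has_vector_derivative_def differentiable_def by blast
    have h4: "((\<lambda>r. V0 (\<phi> r x)) has_vector_derivative of_real (Re (cnj (pt \<phi> s x) * V0' (\<phi> s x)))) (at s)"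
      using V0_deriv dif unfolding pt_def by blast
    have "((\<lambda>r. e0 K c C0 a V0 \<phi> r x) has_vector_derivative
      K / of_real (c^2) * (of_real (2 * Re (cnj (pt (pt \<phi>) s x) * pt \<phi> s x))
          + C0^2 * of_real (c^4) / 4 * of_real (2 * Re (cnj (pt \<phi> s x) * \<phi> s x)))
      + (of_real (A s) * of_real (\<Sum>j\<in>UNIV. 2 * Re (cnj (blinfun_apply (blinfun_apply (D2 (s, x)) \<tau>) (\<sigma> j)) * px j \<phi> s x))
         + of_real (A' s) * of_real (S3 s x))
      + 2 * of_real (Re (cnj (pt \<phi> s x) * V0' (\<phi> s x)))) (at s)"
      unfolding e0_def A_def[symmetric] S3_def[symmetric]
      by (intro has_vector_derivative_add has_vector_derivative_mult_right has_vector_derivative_mult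
            h1 h2 h3 h4 has_A)
    then show ?thesis unfolding pt_def[of "e0 K c C0 a V0 \<phi>"] by (rule vector_derivative_at)
  qed
  obtain k where K: "K = of_real k" using K_real by (auto elim: Reals_cases)
  obtain c0 where C0r: "C0 = of_real c0" using C0_real by (auto elim: Reals_cases)
  have Qeq: "(m * of_real (c^2) * exp (\<i> * of_real \<omega>0) / hbar)^2 = of_real (c0^2 * c^4 / 4)"
  proof -
    have "m * exp (\<i> * of_real \<omega>0) / hbar = C0 / 2" by (simp add: C0_def)
    then have "m * of_real (c^2) * exp (\<i> * of_real \<omega>0) / hbar = of_real (c^2) * (C0 / 2)"
      by (metis (no_types, lifting) mult.commute mult.left_commute times_divide_eq_right)
    then have "m * of_real (c^2) * exp (\<i> * of_real \<omega>0) / hbar = of_real (c^2 * (c0/2))"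
      by (simp add: C0r)
    then show ?thesis by (simp del: of_real_mult of_real_power of_real_divide add: power_mult_distrib power_divide flip: power_mult of_real_power)
  qed
  have pw: "pt (e0 K c C0 a V0 \<phi>) s x = - e1 K c a \<phi> s x + 2 * of_real (A s) *
      (\<Sum>j\<in>UNIV. px j (\<lambda>r y. complex_of_real (Re (cnj (px j \<phi> r y) * pt \<phi> r y))) s x)" for s x
  proof -
    define N where "N = of_nat CARD('n) * vector_derivative a (at s) / a s"
    have V: "V0' (\<phi> s x) = - (1 / of_real (c^2)) * K * (pt (pt \<phi>) s x + N * pt \<phi> s x
           + of_real (c0^2 * c^4 / 4) * \<phi> s x) + of_real (A s) * lap \<phi> s x"
      using equation[rule_format, of s x] unfolding Qeq N_def A_def[symmetric]
      by (metis eq_iff_diff_eq_0)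
    have R1: "Re (cnj (pt \<phi> s x) * V0' (\<phi> s x)) =
       - (k / c^2) * (Re (cnj (pt \<phi> s x) * pt (pt \<phi>) s x) + Re N * (cmod (pt \<phi> s x))\<^sup>2
          + (c0^2 * c^4 / 4) * Re (cnj (pt \<phi> s x) * \<phi> s x))
       + A s * (\<Sum>j\<in>UNIV. Re (cnj (pt \<phi> s x) * blinfun_apply (blinfun_apply (D2 (s, x)) (\<sigma> j)) (\<sigma> j)))"
      unfolding V lap_eq K cmod_power2 by (simp add: sum_distrib_left algebra_simps power2_eq_square add_divide_distrib diff_divide_distrib)
    show ?thesis
      unfolding pte0 e1_def A'_eq div_eq
      unfolding R1 N_def[symmetric] A_def[symmetric] S3_def[symmetric]
      unfolding K C0r
      by (simp add: sum_distrib_left sum.distrib algebra_simps cmod_power2 power2_eq_square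
            add_divide_distrib diff_divide_distrib)
  qed
  have intpt: "integral UNIV (pt (e0 K c C0 a V0 \<phi>) s) = - integral UNIV (e1 K c a \<phi> s)" for s
  proof -
    have R0: "((\<lambda>x. \<Sum>j\<in>UNIV. Re (cnj (blinfun_apply (blinfun_apply (D2 (s, x)) (\<sigma> j)) (\<sigma> j)) * pt \<phi> s x
        + cnj (px j \<phi> s x) * blinfun_apply (blinfun_apply (D2 (s, x)) (\<sigma> j)) \<tau>)) has_integral 0) UNIV"
      by (rule cancel_div[OF div_vanish[rule_format, of s] has_pxpx has_pxpt])
    have "(\<lambda>x. \<Sum>j\<in>UNIV. px j (\<lambda>r y. complex_of_real (Re (cnj (px j \<phi> r y) * pt \<phi> r y))) s x)
       = (\<lambda>x. of_real (\<Sum>j\<in>UNIV. Re (cnj (blinfun_apply (blinfun_apply (D2 (s, x)) (\<sigma> j)) (\<sigma> j)) * pt \<phi> s x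
        + cnj (px j \<phi> s x) * blinfun_apply (blinfun_apply (D2 (s, x)) (\<sigma> j)) \<tau>)))"
      by (rule ext) (simp only: div_eq of_real_sum sym)
    with has_integral_linear[OF R0 bounded_linear_of_real]
    have divc: "((\<lambda>x. \<Sum>j\<in>UNIV. px j (\<lambda>r y. complex_of_real (Re (cnj (px j \<phi> r y) * pt \<phi> r y))) s x) has_integral 0) UNIV"
      by (simp add: o_def)
    have "((\<lambda>x. - e1 K c a \<phi> s x + 2 * of_real (A s) *
      (\<Sum>j\<in>UNIV. px j (\<lambda>r y. complex_of_real (Re (cnj (px j \<phi> r y) * pt \<phi> r y))) s x))
       has_integral (- integral UNIV (e1 K c a \<phi> s) + 2 * of_real (A s) * 0)) UNIV"
      by (intro has_integral_add has_integral_neg has_integral_mult_right integrable_integral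
          e1_int[rule_format] divc)
    moreover have "pt (e0 K c C0 a V0 \<phi>) s = (\<lambda>x. - e1 K c a \<phi> s x + 2 * of_real (A s) *
      (\<Sum>j\<in>UNIV. px j (\<lambda>r y. complex_of_real (Re (cnj (px j \<phi> r y) * pt \<phi> r y))) s x))"
      by (rule ext) (rule pw)
    ultimately show ?thesis by (simp add: integral_unique)
  qed
  show ?thesis
    by (rule ftc_part) (use diff_under_int intpt in simp)
qed


end
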